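(* In the sleeping multi-armed bandit setting, let $(\ell_t)_{t\ge1}$ be i.i.d. random loss vectors in $[0,1]^K$ with mean vector $\mu$, where for each $t$, $\ell_t$ is independent of everything determined before the learner observes $\ell_t(k_t)$ at round $t$ (including $S_1,\dots,S_t$ and $k_1,\dots,k_t$), and let $(S_t)_{t\ge1}$ be any sequence of availability sets such that $S_t$ may depend only on $(\ell_s)_{s\le t-1}$ (and past play). Then for any algorithm, $$\max_{1\le i,j\le K}\mathbb E\big[R_T^{\mathrm{int}}(i\to j)\big]\le\max_{\sigma}\mathbb E\big[R_T^{\mathrm{ordering}}(\sigma)\big],$$ the maximum on the right being over all orderings $\sigma$ of $[K]$.
   Context: Sleeping multi-armed bandit setting: $K$ arms $[K]$. At each round $t$ a nonempty availability set $S_t\subseteq[K]$ is revealed, the learner (possibly randomized, using only $S_1,\dots,S_t$, previously observed losses and internal randomness) selects $k_t\in S_t$ and observes $\ell_t(k_t)$. Internal sleeping regret: $R_T^{\mathrm{int}}(i\to j)=\sum_{t=1}^T\big(\ell_t(k_t)-\ell_t(j)\big)\mathbf 1\{k_t=i,\ j\in S_t\}$. An ordering is a permutation $\sigma=(\sigma_1,\dots,\sigma_K)$ of $[K]$; for nonempty $S\subseteq[K]$, $\sigma(S)=\sigma_m$ with $m=\min\{i:\sigma_i\in S\}$. Ordering regret: $R_T^{\mathrm{ordering}}(\sigma)=\sum_{t=1}^T\big(\ell_t(k_t)-\ell_t(\sigma(S_t))\big)$. *)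

theory Defs
  imports "HOL-Probability.Probability" "HOL-Combinatorics.Multiset_Permutations"
begin

text \<open>Arms are 0,...,K-1 (the set {..<K}); rounds are t = 1,2,...
  An ordering is a list in permutations_of_set {..<K}.\<close>

definition order_choice :: "nat list \<Rightarrow> nat set \<Rightarrow> nat" where
  "order_choice \<sigma> S = hd (filter (\<lambda>x. x \<in> S) \<sigma>)"

definition internal_regret ::
  "(nat \<Rightarrow> 'a \<Rightarrow> nat \<Rightarrow> real) \<Rightarrow> (nat \<Rightarrow> 'a \<Rightarrow> nat set) \<Rightarrow> (nat \<Rightarrow> 'a \<Rightarrow> nat)
   \<Rightarrow> nat \<Rightarrow> nat \<Rightarrow> nat \<Rightarrow> 'a \<Rightarrow> real" where
  "internal_regret L S k T i j \<omega> =
     (\<Sum>t=1..T. (L t \<omega> (k t \<omega>) - L t \<omega> j) *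
        (if k t \<omega> = i \<and> j \<in> S t \<omega> then 1 else 0))"

definition ordering_regret ::
  "(nat \<Rightarrow> 'a \<Rightarrow> nat \<Rightarrow> real) \<Rightarrow> (nat \<Rightarrow> 'a \<Rightarrow> nat set) \<Rightarrow> (nat \<Rightarrow> 'a \<Rightarrow> nat)
   \<Rightarrow> nat \<Rightarrow> nat list \<Rightarrow> 'a \<Rightarrow> real" where
  "ordering_regret L S k T \<sigma> \<omega> =
     (\<Sum>t=1..T. L t \<omega> (k t \<omega>) - L t \<omega> (order_choice \<sigma> (S t \<omega>)))"

definition loss_events :: "'a measure \<Rightarrow> nat \<Rightarrow> (nat \<Rightarrow> 'a \<Rightarrow> nat \<Rightarrow> real) \<Rightarrow> nat \<Rightarrow> 'a set set" where
  "loss_events M K L t = {{\<omega>\<in>space M. L t \<omega> j \<in> B} | j B. j < K \<and> B \<in> sets borel}"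

definition avail_events :: "'a measure \<Rightarrow> (nat \<Rightarrow> 'a \<Rightarrow> nat set) \<Rightarrow> nat \<Rightarrow> 'a set set" where
  "avail_events M S s = {{\<omega>\<in>space M. S s \<omega> = A} | A. True}"

definition arm_events :: "'a measure \<Rightarrow> (nat \<Rightarrow> 'a \<Rightarrow> nat) \<Rightarrow> nat \<Rightarrow> 'a set set" where
  "arm_events M k s = {{\<omega>\<in>space M. k s \<omega> = i} | i. True}"

definition obs_events :: "'a measure \<Rightarrow> (nat \<Rightarrow> 'a \<Rightarrow> nat \<Rightarrow> real) \<Rightarrow> (nat \<Rightarrow> 'a \<Rightarrow> nat) \<Rightarrow> nat \<Rightarrow> 'a set set" where
  "obs_events M L k s = {{\<omega>\<in>space M. L s \<omega> (k s \<omega>) \<in> B} | B. B \<in> sets borel}"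

definition rand_events :: "'a measure \<Rightarrow> 'b measure \<Rightarrow> ('a \<Rightarrow> 'b) \<Rightarrow> 'a set set" where
  "rand_events M N U = {{\<omega>\<in>space M. U \<omega> \<in> B} | B. B \<in> sets N}"

text \<open>Everything determined before the learner observes the loss of round t:
  internal randomness, losses of rounds s < t, availability sets and chosen arms of rounds s \<le> t.\<close>
definition past_sigma ::
  "'a measure \<Rightarrow> 'b measure \<Rightarrow> ('a \<Rightarrow> 'b) \<Rightarrow> nat \<Rightarrow> (nat \<Rightarrow> 'a \<Rightarrow> nat \<Rightarrow> real)
   \<Rightarrow> (nat \<Rightarrow> 'a \<Rightarrow> nat set) \<Rightarrow> (nat \<Rightarrow> 'a \<Rightarrow> nat) \<Rightarrow> nat \<Rightarrow> 'a set set" where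
  "past_sigma M N U K L S k t = sigma_sets (space M)
     (rand_events M N U \<union> (\<Union>s\<in>{1..<t}. loss_events M K L s)
      \<union> (\<Union>s\<in>{1..t}. avail_events M S s \<union> arm_events M k s))"

end

theory Submission
  imports Defs
begin

lemma hd_filter_min:
  assumes "sorted (map f xs)" "x \<in> set xs" "P x"
  shows "hd (filter P xs) \<in> set xs \<and> (f (hd (filter P xs)) :: real) \<le> f x"
  using assms
proof (induction xs)
  case Nil then show ?case by simp
next
  case (Cons y ys)
  show ?case
  proof (cases "P y")
    case True
    then have "f y \<le> f x" using Cons.prems by auto
    with True show ?thesis by simp
  next
    case False
    then have "x \<in> set ys" using Cons.prems by auto
    with Cons.IH Cons.prems False show ?thesis by simp
  qed
qed

locale bandit = prob_space M
  for M :: "'a measure" +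
  fixes N :: "'b measure" and U :: "'a \<Rightarrow> 'b" and K :: nat
    and L :: "nat \<Rightarrow> 'a \<Rightarrow> nat \<Rightarrow> real"
    and S :: "nat \<Rightarrow> 'a \<Rightarrow> nat set" and k :: "nat \<Rightarrow> 'a \<Rightarrow> nat"
  assumes U_meas: "U \<in> M \<rightarrow>\<^sub>M N"
    and L_meas: "\<And>t j. t \<ge> 1 \<Longrightarrow> j < K \<Longrightarrow> (\<lambda>\<omega>. L t \<omega> j) \<in> borel_measurable M"
    and L_range: "\<And>t j \<omega>. t \<ge> 1 \<Longrightarrow> j < K \<Longrightarrow> \<omega> \<in> space M \<Longrightarrow> L t \<omega> j \<in> {0..1}"
    and L_ident: "\<And>t. t \<ge> 1 \<Longrightarrow>
        distr M (PiM {..<K} (\<lambda>_. borel)) (\<lambda>\<omega>. restrict (L t \<omega>) {..<K})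
      = distr M (PiM {..<K} (\<lambda>_. borel)) (\<lambda>\<omega>. restrict (L 1 \<omega>) {..<K})"
    and L_fresh: "\<And>t. t \<ge> 1 \<Longrightarrow> prob_space.indep_set M
        (sigma_sets (space M) (loss_events M K L t)) (past_sigma M N U K L S k t)"
    and S_valid: "\<And>t \<omega>. t \<ge> 1 \<Longrightarrow> \<omega> \<in> space M \<Longrightarrow> S t \<omega> \<subseteq> {..<K} \<and> S t \<omega> \<noteq> {}"
    and k_valid: "\<And>t \<omega>. t \<ge> 1 \<Longrightarrow> \<omega> \<in> space M \<Longrightarrow> k t \<omega> \<in> S t \<omega>"
    and S_adapted: "\<And>t A. t \<ge> 1 \<Longrightarrow> {\<omega>\<in>space M. S t \<omega> = A} \<in> sigma_sets (space M)
        (\<Union>s\<in>{1..<t}. loss_events M K L s \<union> avail_events M S s \<union> arm_events M k s)"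
    and k_adapted: "\<And>t i. t \<ge> 1 \<Longrightarrow> {\<omega>\<in>space M. k t \<omega> = i} \<in> sigma_sets (space M)
        (rand_events M N U \<union> (\<Union>s\<in>{1..t}. avail_events M S s)
         \<union> (\<Union>s\<in>{1..<t}. obs_events M L k s \<union> arm_events M k s))"
begin

lemma k_lt: "t \<ge> 1 \<Longrightarrow> \<omega> \<in> space M \<Longrightarrow> k t \<omega> < K"
  using k_valid S_valid by blast

lemma Lset: "t \<ge> 1 \<Longrightarrow> j < K \<Longrightarrow> B \<in> sets borel \<Longrightarrow> {\<omega>\<in>space M. L t \<omega> j \<in> B} \<in> sets M"
proof -
  assume a: "t \<ge> 1" "j < K" "B \<in> sets borel"
  have "(\<lambda>\<omega>. L t \<omega> j) -` B \<inter> space M \<in> sets M"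
    by (rule measurable_sets[OF L_meas[OF a(1,2)] a(3)])
  moreover have "(\<lambda>\<omega>. L t \<omega> j) -` B \<inter> space M = {\<omega>\<in>space M. L t \<omega> j \<in> B}" by auto
  ultimately show ?thesis by simp
qed

lemma loss_sets: "t \<ge> 1 \<Longrightarrow> loss_events M K L t \<subseteq> sets M"
  unfolding loss_events_def using Lset by auto

lemma rand_sets: "rand_events M N U \<subseteq> sets M"
proof -
  { fix B assume "B \<in> sets N"
    then have "U -` B \<inter> space M \<in> sets M" by (rule measurable_sets[OF U_meas])
    moreover have "U -` B \<inter> space M = {\<omega>\<in>space M. U \<omega> \<in> B}" by auto
    ultimately have "{\<omega>\<in>space M. U \<omega> \<in> B} \<in> sets M" by simp }
  then show ?thesis unfolding rand_events_def by auto
qed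

lemma meas_step: "t \<ge> 1 \<Longrightarrow> (\<forall>A. {\<omega>\<in>space M. S t \<omega> = A} \<in> sets M) \<and> (\<forall>i. {\<omega>\<in>space M. k t \<omega> = i} \<in> sets M)"
proof (induction t rule: less_induct)
  case (less t)
  have obs: "obs_events M L k s \<subseteq> sets M" if s: "1 \<le> s" "s < t" for s
  proof -
    { fix B :: "real set" assume B: "B \<in> sets borel"
      have "{\<omega>\<in>space M. L s \<omega> (k s \<omega>) \<in> B} = (\<Union>i\<in>{..<K}. {\<omega>\<in>space M. k s \<omega> = i} \<inter> {\<omega>\<in>space M. L s \<omega> i \<in> B})"
        using k_lt[OF s(1)] by auto
      also have "\<dots> \<in> sets M"
        using less.IH[OF s(2) s(1)] Lset[OF s(1) _ B] by (intro sets.finite_UN sets.Int) auto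
      finally have "{\<omega>\<in>space M. L s \<omega> (k s \<omega>) \<in> B} \<in> sets M" . }
    then show ?thesis unfolding obs_events_def by auto
  qed
  have gen1: "(\<Union>s\<in>{1..<t}. loss_events M K L s \<union> avail_events M S s \<union> arm_events M k s) \<subseteq> sets M"
  proof (intro UN_least Un_least)
    fix s assume s: "s \<in> {1..<t}"
    show "loss_events M K L s \<subseteq> sets M" using s loss_sets by auto
    show "avail_events M S s \<subseteq> sets M" using s less.IH[of s] unfolding avail_events_def by auto
    show "arm_events M k s \<subseteq> sets M" using s less.IH[of s] unfolding arm_events_def by auto
  qed
  have SA: "\<forall>A. {\<omega>\<in>space M. S t \<omega> = A} \<in> sets M"
    using S_adapted[OF less.prems] sets.sigma_sets_subset[OF gen1] by blast
  have gen2: "rand_events M N U \<union> (\<Union>s\<in>{1..t}. avail_events M S s)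
         \<union> (\<Union>s\<in>{1..<t}. obs_events M L k s \<union> arm_events M k s) \<subseteq> sets M"
  proof (intro UN_least Un_least)
    show "rand_events M N U \<subseteq> sets M" by (rule rand_sets)
  next
    fix s assume s: "s \<in> {1..t}"
    show "avail_events M S s \<subseteq> sets M"
    proof (cases "s = t")
      case True then show ?thesis using SA unfolding avail_events_def by auto
    next
      case False then show ?thesis using s less.IH[of s] unfolding avail_events_def by auto
    qed
  next
    fix s assume s: "s \<in> {1..<t}"
    show "obs_events M L k s \<subseteq> sets M" using s obs by auto
    show "arm_events M k s \<subseteq> sets M" using s less.IH[of s] unfolding arm_events_def by auto
  qed
  have "\<forall>i. {\<omega>\<in>space M. k t \<omega> = i} \<in> sets M"
    using k_adapted[OF less.prems] sets.sigma_sets_subset[OF gen2] by blast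
  with SA show ?case by blast
qed

lemma past_sets: "t \<ge> 1 \<Longrightarrow> past_sigma M N U K L S k t \<subseteq> sets M"
  unfolding past_sigma_def
proof (rule sets.sigma_sets_subset, intro UN_least Un_least)
  show "rand_events M N U \<subseteq> sets M" by (rule rand_sets)
next
  fix s assume s: "s \<in> {1..<t}"
  show "loss_events M K L s \<subseteq> sets M" using s loss_sets by auto
next
  fix s assume s: "s \<in> {1..t}"
  show "avail_events M S s \<subseteq> sets M" using s meas_step[of s] unfolding avail_events_def by auto
  show "arm_events M k s \<subseteq> sets M" using s meas_step[of s] unfolding arm_events_def by auto
qed

lemma past_sa: "sigma_algebra (space M) (past_sigma M N U K L S k t)"
  unfolding past_sigma_def
  by (rule sigma_algebra_sigma_sets)
     (auto simp: rand_events_def loss_events_def avail_events_def arm_events_def)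


lemma past_SK:
  assumes t: "t \<ge> 1"
  shows "{\<omega>\<in>space M. Q (S t \<omega>) (k t \<omega>)} \<in> past_sigma M N U K L S k t"
proof -
  interpret PS: sigma_algebra "space M" "past_sigma M N U K L S k t" by (rule past_sa)
  have tt: "t \<in> {1..t}" using t by auto
  have bS: "{\<omega>\<in>space M. S t \<omega> = A} \<in> past_sigma M N U K L S k t" for A
    unfolding past_sigma_def
    by (rule sigma_sets.Basic, rule UnI2, rule UN_I[OF tt], rule UnI1) (auto simp: avail_events_def)
  have bk: "{\<omega>\<in>space M. k t \<omega> = a} \<in> past_sigma M N U K L S k t" for a
    unfolding past_sigma_def
    by (rule sigma_sets.Basic, rule UnI2, rule UN_I[OF tt], rule UnI2) (auto simp: arm_events_def)
  have eq: "{\<omega>\<in>space M. Q (S t \<omega>) (k t \<omega>)} = (\<Union>A\<in>Pow {..<K}. \<Union>a\<in>{a\<in>{..<K}. Q A a}.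
      {\<omega>\<in>space M. S t \<omega> = A} \<inter> {\<omega>\<in>space M. k t \<omega> = a})"
  proof (intro equalityI subsetI)
    fix \<omega> assume w: "\<omega> \<in> {\<omega>\<in>space M. Q (S t \<omega>) (k t \<omega>)}"
    then have "S t \<omega> \<in> Pow {..<K}" "k t \<omega> \<in> {a\<in>{..<K}. Q (S t \<omega>) a}"
      using S_valid[OF t] k_lt[OF t] by auto
    with w show "\<omega> \<in> (\<Union>A\<in>Pow {..<K}. \<Union>a\<in>{a\<in>{..<K}. Q A a}.
      {\<omega>\<in>space M. S t \<omega> = A} \<inter> {\<omega>\<in>space M. k t \<omega> = a})" by blast
  qed auto
  show ?thesis unfolding eq using bS bk by (intro PS.finite_UN PS.Int) auto
qed

lemma indep_C:
  assumes t: "t \<ge> 1" and a: "a < K" and E: "E \<in> past_sigma M N U K L S k t"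
  shows "(\<integral>\<omega>. L t \<omega> a * indicator E \<omega> \<partial>M) = (\<integral>\<omega>. L t \<omega> a \<partial>M) * prob E"
proof -
  interpret PS: sigma_algebra "space M" "past_sigma M N U K L S k t" by (rule past_sa)
  have Em: "E \<in> sets M" using past_sets[OF t] E by auto
  have Esp: "E \<subseteq> space M" using PS.sets_into_space[OF E] .
  have Lm: "(\<lambda>\<omega>. L t \<omega> a) \<in> borel_measurable M" by (rule L_meas[OF t a])
  have Im: "(indicator E :: 'a \<Rightarrow> real) \<in> borel_measurable M" using Em by simp
  have s1: "sigma_sets (space M) {(\<lambda>\<omega>. L t \<omega> a) -` A \<inter> space M | A. A \<in> sets borel}
      \<subseteq> sigma_sets (space M) (loss_events M K L t)"
  proof (rule sigma_sets_mono', rule subsetI)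
    fix x assume "x \<in> {(\<lambda>\<omega>. L t \<omega> a) -` A \<inter> space M | A. A \<in> sets borel}"
    then obtain A where A: "A \<in> sets borel" "x = (\<lambda>\<omega>. L t \<omega> a) -` A \<inter> space M" by blast
    then have "x = {\<omega>\<in>space M. L t \<omega> a \<in> A}" by auto
    with A a show "x \<in> loss_events M K L t" unfolding loss_events_def by blast
  qed
  have s2: "sigma_sets (space M) {(indicator E :: 'a \<Rightarrow> real) -` A \<inter> space M | A. A \<in> sets borel}
      \<subseteq> past_sigma M N U K L S k t"
  proof (rule PS.sigma_sets_subset, rule subsetI)
    fix x assume "x \<in> {(indicator E :: 'a \<Rightarrow> real) -` A \<inter> space M | A. A \<in> sets borel}"
    then obtain A :: "real set" where A: "x = (indicator E :: 'a \<Rightarrow> real) -` A \<inter> space M" by blast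
    have "x = (if (1::real) \<in> A then E else {}) \<union> (if (0::real) \<in> A then space M - E else {})"
      unfolding A using Esp by (auto simp: indicator_def of_bool_def split: if_splits)
    also have "\<dots> \<in> past_sigma M N U K L S k t" using E by (intro PS.Un) auto
    finally show "x \<in> past_sigma M N U K L S k t" .
  qed
  have "indep_set (sigma_sets (space M) (loss_events M K L t)) (past_sigma M N U K L S k t)"
    by (rule L_fresh[OF t])
  then have "indep_set (sigma_sets (space M) {(\<lambda>\<omega>. L t \<omega> a) -` A \<inter> space M | A. A \<in> sets borel})
     (sigma_sets (space M) {(indicator E :: 'a \<Rightarrow> real) -` A \<inter> space M | A. A \<in> sets borel})"
    unfolding indep_set_def
    by (rule indep_sets_mono_sets) (use s1 s2 in \<open>auto split: bool.split\<close>)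
  then have iv: "indep_var borel (\<lambda>\<omega>. L t \<omega> a) borel (indicator E :: 'a \<Rightarrow> real)"
    using Lm Im by (simp add: indep_var_eq)
  have int1: "integrable M (\<lambda>\<omega>. L t \<omega> a)"
    by (rule integrable_const_bound[where B=1]) (use L_range[OF t a] Lm in \<open>auto intro!: AE_I2\<close>)
  have int2: "integrable M (indicator E :: 'a \<Rightarrow> real)" using Em by (intro integrable_real_indicator) (auto simp: emeasure_eq_measure)
  have "(\<integral>\<omega>. L t \<omega> a * indicator E \<omega> \<partial>M) = (\<integral>\<omega>. L t \<omega> a \<partial>M) * (\<integral>\<omega>. indicator E \<omega> \<partial>M)"
    by (rule indep_var_lebesgue_integral[OF iv int1 int2])
  then show ?thesis using Em Esp by (simp add: Int_absorb2)
qed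

lemma mean_eq:
  assumes t: "t \<ge> 1" and a: "a < K"
  shows "(\<integral>\<omega>. L t \<omega> a \<partial>M) = (\<integral>\<omega>. L 1 \<omega> a \<partial>M)"
proof -
  have rm: "(\<lambda>\<omega>. restrict (L s \<omega>) {..<K}) \<in> M \<rightarrow>\<^sub>M PiM {..<K} (\<lambda>_. borel)" if "s \<ge> 1" for s
    using L_meas[OF that] by (intro measurable_restrict) auto
  have f: "(\<lambda>x::nat \<Rightarrow> real. x a) \<in> borel_measurable (PiM {..<K} (\<lambda>_. borel))"
    using a by (intro measurable_component_singleton) auto
  have "(\<integral>\<omega>. L t \<omega> a \<partial>M) = (\<integral>x. x a \<partial>distr M (PiM {..<K} (\<lambda>_. borel)) (\<lambda>\<omega>. restrict (L t \<omega>) {..<K}))"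
    using integral_distr[OF rm[OF t] f] a by simp
  also have "\<dots> = (\<integral>x. x a \<partial>distr M (PiM {..<K} (\<lambda>_. borel)) (\<lambda>\<omega>. restrict (L 1 \<omega>) {..<K}))"
    using L_ident[OF t] by simp
  also have "\<dots> = (\<integral>\<omega>. L 1 \<omega> a \<partial>M)"
    using integral_distr[OF rm[of 1] f] a by simp
  finally show ?thesis .
qed

definition m :: "nat \<Rightarrow> real" where "m a = (\<integral>\<omega>. L 1 \<omega> a \<partial>M)"

lemma meas_X:
  assumes X: "\<And>\<omega>. \<omega> \<in> space M \<Longrightarrow> X \<omega> < K"
    and Xs: "\<And>a. a < K \<Longrightarrow> {\<omega>\<in>space M. X \<omega> = a} \<in> sets M"
    and F: "\<And>a. a < K \<Longrightarrow> (\<lambda>\<omega>. F \<omega> a) \<in> borel_measurable M"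
  shows "(\<lambda>\<omega>. F \<omega> (X \<omega>) :: real) \<in> borel_measurable M"
proof -
  have m1: "(\<lambda>\<omega>. \<Sum>a<K. indicator {\<omega>\<in>space M. X \<omega> = a} \<omega> * F \<omega> a) \<in> borel_measurable M"
    using Xs F by (intro borel_measurable_sum borel_measurable_times borel_measurable_indicator) auto
  have eq: "(\<Sum>a<K. indicator {\<omega>\<in>space M. X \<omega> = a} \<omega> * F \<omega> a) = F \<omega> (X \<omega>)" if w: "\<omega> \<in> space M" for \<omega>
  proof -
    have "(\<Sum>a<K. indicator {\<omega>\<in>space M. X \<omega> = a} \<omega> * F \<omega> a) = (\<Sum>a<K. if X \<omega> = a then F \<omega> a else 0)"
      using w by (intro sum.cong) (auto simp: indicator_def)
    also have "\<dots> = F \<omega> (X \<omega>)" using X[OF w] by simp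
    finally show ?thesis .
  qed
  show ?thesis using m1 measurable_cong[of M "\<lambda>\<omega>. \<Sum>a<K. indicator {\<omega>\<in>space M. X \<omega> = a} \<omega> * F \<omega> a" "\<lambda>\<omega>. F \<omega> (X \<omega>)"] eq
    by auto
qed

lemma int_XB:
  assumes X: "\<And>\<omega>. \<omega> \<in> space M \<Longrightarrow> X \<omega> < K"
    and Xs: "\<And>a. a < K \<Longrightarrow> {\<omega>\<in>space M. X \<omega> = a} \<in> sets M"
    and F: "\<And>a. a < K \<Longrightarrow> (\<lambda>\<omega>. F \<omega> a) \<in> borel_measurable M"
    and bd: "\<And>\<omega> a. \<omega> \<in> space M \<Longrightarrow> a < K \<Longrightarrow> \<bar>F \<omega> a\<bar> \<le> C"
    and B: "B \<in> sets M"
  shows "integrable M (\<lambda>\<omega>. F \<omega> (X \<omega>) * indicator B \<omega> :: real)"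
proof (rule integrable_const_bound[where B=C])
  show "(\<lambda>\<omega>. F \<omega> (X \<omega>) * indicator B \<omega>) \<in> borel_measurable M"
    using meas_X[OF X Xs F] B by (intro borel_measurable_times borel_measurable_indicator) auto
  show "AE \<omega> in M. norm (F \<omega> (X \<omega>) * indicator B \<omega>) \<le> C"
  proof (rule AE_I2)
    fix \<omega> assume w: "\<omega> \<in> space M"
    have "\<bar>F \<omega> (X \<omega>)\<bar> \<le> C" using bd[OF w X[OF w]] .
    then show "norm (F \<omega> (X \<omega>) * indicator B \<omega>) \<le> C" by (auto simp: indicator_def)
  qed
qed


lemma G:
  assumes t: "t \<ge> 1" and X: "\<And>\<omega>. \<omega> \<in> space M \<Longrightarrow> X \<omega> < K"
    and Xs: "\<And>a. a < K \<Longrightarrow> {\<omega>\<in>space M. X \<omega> = a} \<in> past_sigma M N U K L S k t"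
    and B: "B \<in> past_sigma M N U K L S k t"
  shows "(\<integral>\<omega>. L t \<omega> (X \<omega>) * indicator B \<omega> \<partial>M) = (\<integral>\<omega>. m (X \<omega>) * indicator B \<omega> \<partial>M)"
proof -
  interpret PS: sigma_algebra "space M" "past_sigma M N U K L S k t" by (rule past_sa)
  define E where "E a = {\<omega>\<in>space M. X \<omega> = a} \<inter> B" for a
  have EP: "E a \<in> past_sigma M N U K L S k t" if "a < K" for a
    unfolding E_def using Xs[OF that] B by (rule PS.Int)
  have Em: "E a \<in> sets M" if "a < K" for a using EP[OF that] past_sets[OF t] by auto
  have dec: "F \<omega> (X \<omega>) * indicator B \<omega> = (\<Sum>a<K. F \<omega> a * indicator (E a) \<omega>)"
    if w: "\<omega> \<in> space M" for F :: "'a \<Rightarrow> nat \<Rightarrow> real" and \<omega>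
  proof -
    have "(\<Sum>a<K. F \<omega> a * indicator (E a) \<omega>) = (\<Sum>a<K. if X \<omega> = a then F \<omega> a * indicator B \<omega> else 0)"
      using w by (intro sum.cong) (auto simp: E_def indicator_def)
    also have "\<dots> = F \<omega> (X \<omega>) * indicator B \<omega>" using X[OF w] by simp
    finally show ?thesis by simp
  qed
  have i1: "integrable M (\<lambda>\<omega>. L t \<omega> a * indicator (E a) \<omega>)" if a: "a < K" for a
  proof (rule integrable_const_bound[where B=1])
    show "(\<lambda>\<omega>. L t \<omega> a * indicator (E a) \<omega>) \<in> borel_measurable M"
      using L_meas[OF t a] Em[OF a] by (intro borel_measurable_times borel_measurable_indicator) auto
    show "AE \<omega> in M. norm (L t \<omega> a * indicator (E a) \<omega>) \<le> 1"
      using L_range[OF t a] by (intro AE_I2) (auto simp: indicator_def)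
  qed
  have i2: "integrable M (\<lambda>\<omega>. m a * indicator (E a) \<omega>)" if a: "a < K" for a
    using Em[OF a] by (intro integrable_mult_right integrable_real_indicator) (auto simp: emeasure_eq_measure)
  have "(\<integral>\<omega>. L t \<omega> (X \<omega>) * indicator B \<omega> \<partial>M) = (\<integral>\<omega>. (\<Sum>a<K. L t \<omega> a * indicator (E a) \<omega>) \<partial>M)"
    by (rule Bochner_Integration.integral_cong[OF refl]) (rule dec[of _ "\<lambda>\<omega> a. L t \<omega> a"])
  also have "\<dots> = (\<Sum>a<K. \<integral>\<omega>. L t \<omega> a * indicator (E a) \<omega> \<partial>M)"
    by (rule Bochner_Integration.integral_sum) (use i1 in auto)
  also have "\<dots> = (\<Sum>a<K. m a * prob (E a))"
    using indep_C[OF t _ EP] mean_eq[OF t] by (intro sum.cong) (auto simp: m_def)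
  also have "\<dots> = (\<Sum>a<K. \<integral>\<omega>. m a * indicator (E a) \<omega> \<partial>M)"
    using Em by (intro sum.cong) (auto simp: Int_absorb2 sets.sets_into_space)
  also have "\<dots> = (\<integral>\<omega>. (\<Sum>a<K. m a * indicator (E a) \<omega>) \<partial>M)"
    by (rule Bochner_Integration.integral_sum[symmetric]) (use i2 in auto)
  also have "\<dots> = (\<integral>\<omega>. m (X \<omega>) * indicator B \<omega> \<partial>M)"
    by (rule Bochner_Integration.integral_cong[OF refl]) (use dec[of _ "\<lambda>\<omega> a. m a"] in simp)
  finally show ?thesis .
qed

lemma G0:
  assumes t: "t \<ge> 1" and X: "\<And>\<omega>. \<omega> \<in> space M \<Longrightarrow> X \<omega> < K"
    and Xs: "\<And>a. a < K \<Longrightarrow> {\<omega>\<in>space M. X \<omega> = a} \<in> past_sigma M N U K L S k t"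
  shows "(\<integral>\<omega>. L t \<omega> (X \<omega>) \<partial>M) = (\<integral>\<omega>. m (X \<omega>) \<partial>M)"
proof -
  have sp: "space M \<in> past_sigma M N U K L S k t" using past_SK[OF t, of "\<lambda>_ _. True"] by simp
  have "(\<integral>\<omega>. L t \<omega> (X \<omega>) \<partial>M) = (\<integral>\<omega>. L t \<omega> (X \<omega>) * indicator (space M) \<omega> \<partial>M)"
    by (rule Bochner_Integration.integral_cong[OF refl]) auto
  also have "\<dots> = (\<integral>\<omega>. m (X \<omega>) * indicator (space M) \<omega> \<partial>M)" by (rule G[OF t X Xs sp])
  also have "\<dots> = (\<integral>\<omega>. m (X \<omega>) \<partial>M)" by (rule Bochner_Integration.integral_cong[OF refl]) auto
  finally show ?thesis .
qed

lemma int_X: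
  assumes X: "\<And>\<omega>. \<omega> \<in> space M \<Longrightarrow> X \<omega> < K"
    and Xs: "\<And>a. a < K \<Longrightarrow> {\<omega>\<in>space M. X \<omega> = a} \<in> sets M"
    and F: "\<And>a. a < K \<Longrightarrow> (\<lambda>\<omega>. F \<omega> a) \<in> borel_measurable M"
    and bd: "\<And>\<omega> a. \<omega> \<in> space M \<Longrightarrow> a < K \<Longrightarrow> \<bar>F \<omega> a\<bar> \<le> C"
  shows "integrable M (\<lambda>\<omega>. F \<omega> (X \<omega>) :: real)"
proof -
  have "integrable M (\<lambda>\<omega>. F \<omega> (X \<omega>) * indicator (space M) \<omega>)"
    by (rule int_XB[OF X Xs F bd]) auto
  then show ?thesis by (rule Bochner_Integration.integrable_cong[OF refl, THEN iffD1, rotated]) auto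
qed

definition \<sigma>0 where "\<sigma>0 = sort_key m (sorted_list_of_set {..<K})"

lemma \<sigma>0_perm: "\<sigma>0 \<in> permutations_of_set {..<K}"
  unfolding \<sigma>0_def permutations_of_set_def by simp

lemma oc_props: "A \<subseteq> {..<K} \<Longrightarrow> x \<in> A \<Longrightarrow> order_choice \<sigma>0 A < K \<and> m (order_choice \<sigma>0 A) \<le> m x"
  using hd_filter_min[of m \<sigma>0 x "\<lambda>y. y \<in> A"] unfolding order_choice_def \<sigma>0_def by auto


lemma main_ineq:
  assumes i: "i < K" and j: "j < K"
  shows "(\<integral>\<omega>. internal_regret L S k T i j \<omega> \<partial>M) \<le> (\<integral>\<omega>. ordering_regret L S k T \<sigma>0 \<omega> \<partial>M)"
proof -
  define E where "E t = {\<omega>\<in>space M. k t \<omega> = i \<and> j \<in> S t \<omega>}" for t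
  define oc where "oc t \<omega> = order_choice \<sigma>0 (S t \<omega>)" for t \<omega>
  define C where "C = (\<Sum>a<K. \<bar>m a\<bar>)"
  have EP: "E t \<in> past_sigma M N U K L S k t" if "t \<ge> 1" for t
    unfolding E_def using past_SK[OF that, of "\<lambda>A b. b = i \<and> j \<in> A"] by simp
  have Em: "E t \<in> sets M" if "t \<ge> 1" for t using EP[OF that] past_sets[OF that] by auto
  have kP: "{\<omega>\<in>space M. k t \<omega> = a} \<in> past_sigma M N U K L S k t" if "t \<ge> 1" for t a
    using past_SK[OF that, of "\<lambda>_ b. b = a"] by simp
  have jP: "{\<omega>\<in>space M. j = a} \<in> past_sigma M N U K L S k t" if "t \<ge> 1" for t a
    using past_SK[OF that, of "\<lambda>_ _. j = a"] by simp
  have oP: "{\<omega>\<in>space M. oc t \<omega> = a} \<in> past_sigma M N U K L S k t" if "t \<ge> 1" for t a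
    unfolding oc_def using past_SK[OF that, of "\<lambda>A _. order_choice \<sigma>0 A = a"] by simp
  have kM: "{\<omega>\<in>space M. k t \<omega> = a} \<in> sets M" if "t \<ge> 1" for t a using kP[OF that] past_sets[OF that] by auto
  have jM: "{\<omega>\<in>space M. j = a} \<in> sets M" if "t \<ge> 1" for t :: nat and a using jP[OF that] past_sets[OF that] by auto
  have oM: "{\<omega>\<in>space M. oc t \<omega> = a} \<in> sets M" if "t \<ge> 1" for t a using oP[OF that] past_sets[OF that] by auto
  have oc_lt: "oc t \<omega> < K" and oc_le: "m (oc t \<omega>) \<le> m x"
    if "t \<ge> 1" "\<omega> \<in> space M" "x \<in> S t \<omega>" for t \<omega> x
    using oc_props[of "S t \<omega>" x] S_valid[OF that(1,2)] that(3) unfolding oc_def by auto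
  have oc_lt': "oc t \<omega> < K" if "t \<ge> 1" "\<omega> \<in> space M" for t \<omega>
    using oc_lt[OF that k_valid[OF that]] .
  have Lb: "\<bar>L t \<omega> a\<bar> \<le> 1" if "t \<ge> 1" "\<omega> \<in> space M" "a < K" for t \<omega> a
    using L_range[OF that(1,3,2)] by auto
  have mb: "\<bar>m a\<bar> \<le> C" if "a < K" for a
    unfolding C_def using that by (intro member_le_sum) auto
  note Lmeas = L_meas
  have cmeas: "(\<lambda>\<omega>. m a) \<in> borel_measurable M" for a by simp
  have iLk: "integrable M (\<lambda>\<omega>. L t \<omega> (k t \<omega>) * indicator (E t) \<omega>)" if t: "t \<ge> 1" for t
    by (rule int_XB[OF k_lt[OF t] kM[OF t] L_meas[OF t] Lb[OF t] Em[OF t]])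
  have iLj: "integrable M (\<lambda>\<omega>. L t \<omega> ((\<lambda>_. j) \<omega>) * indicator (E t) \<omega>)" if t: "t \<ge> 1" for t
    by (rule int_XB[OF _ jM[OF t] L_meas[OF t] Lb[OF t] Em[OF t]]) (use j in auto)
  have imk: "integrable M (\<lambda>\<omega>. m (k t \<omega>) * indicator (E t) \<omega>)" if t: "t \<ge> 1" for t
    by (rule int_XB[where F="\<lambda>\<omega> a. m a", OF k_lt[OF t] kM[OF t] cmeas mb Em[OF t]])
  have imj: "integrable M (\<lambda>\<omega>. m j * indicator (E t) \<omega>)" if t: "t \<ge> 1" for t
    using Em[OF t] by (intro integrable_mult_right integrable_real_indicator) (auto simp: emeasure_eq_measure)
  have iLk0: "integrable M (\<lambda>\<omega>. L t \<omega> (k t \<omega>))" if t: "t \<ge> 1" for t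
    by (rule int_X[OF k_lt[OF t] kM[OF t] L_meas[OF t] Lb[OF t]])
  have iLo0: "integrable M (\<lambda>\<omega>. L t \<omega> (oc t \<omega>))" if t: "t \<ge> 1" for t
    by (rule int_X[OF oc_lt'[OF t] oM[OF t] L_meas[OF t] Lb[OF t]])
  have imk0: "integrable M (\<lambda>\<omega>. m (k t \<omega>))" if t: "t \<ge> 1" for t
    by (rule int_X[where F="\<lambda>\<omega> a. m a", OF k_lt[OF t] kM[OF t] cmeas mb])
  have imo0: "integrable M (\<lambda>\<omega>. m (oc t \<omega>))" if t: "t \<ge> 1" for t
    by (rule int_X[where F="\<lambda>\<omega> a. m a", OF oc_lt'[OF t] oM[OF t] cmeas mb])
  have I1: "(\<integral>\<omega>. internal_regret L S k T i j \<omega> \<partial>M) =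
     (\<Sum>t\<in>{1..T}. \<integral>\<omega>. L t \<omega> (k t \<omega>) * indicator (E t) \<omega> - L t \<omega> j * indicator (E t) \<omega> \<partial>M)"
  proof -
    have "(\<integral>\<omega>. internal_regret L S k T i j \<omega> \<partial>M) =
      (\<integral>\<omega>. (\<Sum>t\<in>{1..T}. L t \<omega> (k t \<omega>) * indicator (E t) \<omega> - L t \<omega> j * indicator (E t) \<omega>) \<partial>M)"
      by (rule Bochner_Integration.integral_cong[OF refl])
         (auto simp: internal_regret_def E_def indicator_def intro!: sum.cong)
    also have "\<dots> = (\<Sum>t\<in>{1..T}. \<integral>\<omega>. L t \<omega> (k t \<omega>) * indicator (E t) \<omega> - L t \<omega> j * indicator (E t) \<omega> \<partial>M)"
      by (rule Bochner_Integration.integral_sum) (use iLk iLj in auto)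
    finally show ?thesis .
  qed
  have I2: "(\<integral>\<omega>. L t \<omega> (k t \<omega>) * indicator (E t) \<omega> - L t \<omega> j * indicator (E t) \<omega> \<partial>M)
     = (\<integral>\<omega>. m (k t \<omega>) * indicator (E t) \<omega> - m j * indicator (E t) \<omega> \<partial>M)" if t: "t \<in> {1..T}" for t
  proof -
    have t1: "t \<ge> 1" using t by auto
    have g1: "(\<integral>\<omega>. L t \<omega> (k t \<omega>) * indicator (E t) \<omega> \<partial>M) = (\<integral>\<omega>. m (k t \<omega>) * indicator (E t) \<omega> \<partial>M)"
      by (rule G[OF t1 k_lt[OF t1] kP[OF t1] EP[OF t1]])
    have g2: "(\<integral>\<omega>. L t \<omega> ((\<lambda>_. j) \<omega>) * indicator (E t) \<omega> \<partial>M) = (\<integral>\<omega>. m ((\<lambda>_. j) \<omega>) * indicator (E t) \<omega> \<partial>M)"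
      by (rule G[OF t1 _ jP[OF t1] EP[OF t1]]) (use j in auto)
    show ?thesis
      using g1 g2 iLk[OF t1] iLj[OF t1] imk[OF t1] imj[OF t1] by (simp add: Bochner_Integration.integral_diff)
  qed
  have O1: "(\<integral>\<omega>. ordering_regret L S k T \<sigma>0 \<omega> \<partial>M) =
     (\<Sum>t\<in>{1..T}. \<integral>\<omega>. m (k t \<omega>) - m (oc t \<omega>) \<partial>M)"
  proof -
    have "(\<integral>\<omega>. ordering_regret L S k T \<sigma>0 \<omega> \<partial>M) =
      (\<integral>\<omega>. (\<Sum>t\<in>{1..T}. L t \<omega> (k t \<omega>) - L t \<omega> (oc t \<omega>)) \<partial>M)"
      by (simp add: ordering_regret_def oc_def)
    also have "\<dots> = (\<Sum>t\<in>{1..T}. \<integral>\<omega>. L t \<omega> (k t \<omega>) - L t \<omega> (oc t \<omega>) \<partial>M)"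
      by (rule Bochner_Integration.integral_sum) (use iLk0 iLo0 in auto)
    also have "\<dots> = (\<Sum>t\<in>{1..T}. \<integral>\<omega>. m (k t \<omega>) - m (oc t \<omega>) \<partial>M)"
    proof (rule sum.cong[OF refl])
      fix t assume "t \<in> {1..T}"
      then have t1: "t \<ge> 1" by auto
      have g1: "(\<integral>\<omega>. L t \<omega> (k t \<omega>) \<partial>M) = (\<integral>\<omega>. m (k t \<omega>) \<partial>M)"
        by (rule G0[OF t1 k_lt[OF t1] kP[OF t1]])
      have g2: "(\<integral>\<omega>. L t \<omega> (oc t \<omega>) \<partial>M) = (\<integral>\<omega>. m (oc t \<omega>) \<partial>M)"
        by (rule G0[OF t1 oc_lt'[OF t1] oP[OF t1]])
      show "(\<integral>\<omega>. L t \<omega> (k t \<omega>) - L t \<omega> (oc t \<omega>) \<partial>M) = (\<integral>\<omega>. m (k t \<omega>) - m (oc t \<omega>) \<partial>M)"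
        using g1 g2 iLk0[OF t1] iLo0[OF t1] imk0[OF t1] imo0[OF t1]
        by (simp add: Bochner_Integration.integral_diff)
    qed
    finally show ?thesis .
  qed
  have cmp: "(\<integral>\<omega>. m (k t \<omega>) * indicator (E t) \<omega> - m j * indicator (E t) \<omega> \<partial>M)
      \<le> (\<integral>\<omega>. m (k t \<omega>) - m (oc t \<omega>) \<partial>M)" if t: "t \<in> {1..T}" for t
  proof -
    have t1: "t \<ge> 1" using t by auto
    show ?thesis
    proof (rule integral_mono)
      show "integrable M (\<lambda>\<omega>. m (k t \<omega>) * indicator (E t) \<omega> - m j * indicator (E t) \<omega>)"
        using imk[OF t1] imj[OF t1] by auto
      show "integrable M (\<lambda>\<omega>. m (k t \<omega>) - m (oc t \<omega>))"
        using imk0[OF t1] imo0[OF t1] by auto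
      fix \<omega> assume w: "\<omega> \<in> space M"
      have a1: "m (oc t \<omega>) \<le> m (k t \<omega>)" by (rule oc_le[OF t1 w k_valid[OF t1 w]])
      show "m (k t \<omega>) * indicator (E t) \<omega> - m j * indicator (E t) \<omega> \<le> m (k t \<omega>) - m (oc t \<omega>)"
      proof (cases "\<omega> \<in> E t")
        case True
        then have "j \<in> S t \<omega>" unfolding E_def by auto
        from oc_le[OF t1 w this] True show ?thesis by simp
      next
        case False
        with a1 show ?thesis by simp
      qed
    qed
  qed
  have "(\<Sum>t\<in>{1..T}. \<integral>\<omega>. L t \<omega> (k t \<omega>) * indicator (E t) \<omega> - L t \<omega> j * indicator (E t) \<omega> \<partial>M)
     \<le> (\<Sum>t\<in>{1..T}. \<integral>\<omega>. m (k t \<omega>) - m (oc t \<omega>) \<partial>M)"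
  proof (rule sum_mono)
    fix t assume t: "t \<in> {1..T}"
    show "(\<integral>\<omega>. L t \<omega> (k t \<omega>) * indicator (E t) \<omega> - L t \<omega> j * indicator (E t) \<omega> \<partial>M)
     \<le> (\<integral>\<omega>. m (k t \<omega>) - m (oc t \<omega>) \<partial>M)"
      unfolding I2[OF t] by (rule cmp[OF t])
  qed
  then show ?thesis unfolding I1 O1 .
qed

end

theorem mainTheorem4:
  fixes M :: "'a measure" and N :: "'b measure" and U :: "'a \<Rightarrow> 'b"
    and K T :: nat and \<mu> :: "nat \<Rightarrow> real"
    and L :: "nat \<Rightarrow> 'a \<Rightarrow> nat \<Rightarrow> real"
    and S :: "nat \<Rightarrow> 'a \<Rightarrow> nat set" and k :: "nat \<Rightarrow> 'a \<Rightarrow> nat"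
  assumes P: "prob_space M"
    and U_meas: "U \<in> M \<rightarrow>\<^sub>M N"
    and L_meas: "\<And>t j. t \<ge> 1 \<Longrightarrow> j < K \<Longrightarrow> (\<lambda>\<omega>. L t \<omega> j) \<in> borel_measurable M"
    and L_range: "\<And>t j \<omega>. t \<ge> 1 \<Longrightarrow> j < K \<Longrightarrow> \<omega> \<in> space M \<Longrightarrow> L t \<omega> j \<in> {0..1}"
    and L_indep: "prob_space.indep_sets M (\<lambda>t. sigma_sets (space M) (loss_events M K L t)) {1..}"
    and L_ident: "\<And>t. t \<ge> 1 \<Longrightarrow>
        distr M (PiM {..<K} (\<lambda>_. borel)) (\<lambda>\<omega>. restrict (L t \<omega>) {..<K})
      = distr M (PiM {..<K} (\<lambda>_. borel)) (\<lambda>\<omega>. restrict (L 1 \<omega>) {..<K})"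
    and mean: "\<And>j. j < K \<Longrightarrow> \<mu> j = prob_space.expectation M (\<lambda>\<omega>. L 1 \<omega> j)"
    and L_fresh: "\<And>t. t \<ge> 1 \<Longrightarrow> prob_space.indep_set M
        (sigma_sets (space M) (loss_events M K L t)) (past_sigma M N U K L S k t)"
    and S_valid: "\<And>t \<omega>. t \<ge> 1 \<Longrightarrow> \<omega> \<in> space M \<Longrightarrow> S t \<omega> \<subseteq> {..<K} \<and> S t \<omega> \<noteq> {}"
    and k_valid: "\<And>t \<omega>. t \<ge> 1 \<Longrightarrow> \<omega> \<in> space M \<Longrightarrow> k t \<omega> \<in> S t \<omega>"
    and S_adapted: "\<And>t A. t \<ge> 1 \<Longrightarrow> {\<omega>\<in>space M. S t \<omega> = A} \<in> sigma_sets (space M)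
        (\<Union>s\<in>{1..<t}. loss_events M K L s \<union> avail_events M S s \<union> arm_events M k s)"
    and k_adapted: "\<And>t i. t \<ge> 1 \<Longrightarrow> {\<omega>\<in>space M. k t \<omega> = i} \<in> sigma_sets (space M)
        (rand_events M N U \<union> (\<Union>s\<in>{1..t}. avail_events M S s)
         \<union> (\<Union>s\<in>{1..<t}. obs_events M L k s \<union> arm_events M k s))"
  shows "Max ((\<lambda>(i, j). prob_space.expectation M (internal_regret L S k T i j))
                ` ({..<K} \<times> {..<K}))
       \<le> Max ((\<lambda>\<sigma>. prob_space.expectation M (ordering_regret L S k T \<sigma>))
                ` permutations_of_set {..<K})"
proof -
  interpret B: bandit M N U K L S k
    by (rule bandit.intro[OF P bandit_axioms.intro])
       (fact U_meas L_meas L_range L_ident L_fresh S_valid k_valid S_adapted k_adapted)+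
  obtain \<omega> where w: "\<omega> \<in> space M" using B.not_empty by blast
  have "S 1 \<omega> \<subseteq> {..<K}" "S 1 \<omega> \<noteq> {}" using S_valid[of 1 \<omega>] w by auto
  then have K0: "K > 0" by (metis lessThan_iff lessThan_0 neq0_conv subset_empty)
  let ?A = "(\<lambda>(i, j). prob_space.expectation M (internal_regret L S k T i j)) ` ({..<K} \<times> {..<K})"
  let ?B = "(\<lambda>\<sigma>. prob_space.expectation M (ordering_regret L S k T \<sigma>)) ` permutations_of_set {..<K}"
  have "Max ?A \<le> prob_space.expectation M (ordering_regret L S k T B.\<sigma>0)"
  proof (rule Max.boundedI)
    show "finite ?A" by simp
    show "?A \<noteq> {}" using K0 by auto
    fix x assume "x \<in> ?A"
    then obtain i j where "i < K" "j < K" "x = prob_space.expectation M (internal_regret L S k T i j)" by auto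
    then show "x \<le> prob_space.expectation M (ordering_regret L S k T B.\<sigma>0)"
      using B.main_ineq by simp
  qed
  also have "\<dots> \<le> Max ?B"
    by (rule Max_ge) (use B.\<sigma>0_perm in auto)
  finally show ?thesis .
qed

end
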